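(* Let $\mathcal{A}$ be a central and essential arrangement in $\mathbb{Q}^l$ as in the context, with $\lcm$-period $\rho_0$ and constant $q_0$. If $p$ is a prime with $p>q_0$ and $p$ coprime to $\rho_0$, then $\mathcal{A}$ and $\mathcal{A}_p$ are combinatorially equivalent.
   Context: $\mathcal{A}=\{H_1,\dots,H_n\}$: $n$ distinct linear hyperplanes in $\mathbb{Q}^l$ with $\bigcap H_i=\{0\}$, $H_i=\{\alpha_i=0\}$, $\alpha_i=\sum_{k=1}^lc_{ki}x_k$ with $c_{ki}\in\mathbb{Z}$ not all divisible by any prime. $\mathcal{A}_p$ is the family of $n$ hyperplanes $\{(\alpha_i)_p=0\}$ in $\mathbb{F}_p^l$, where $(\alpha_i)_p$ is the reduction mod $p$. Let $C=(c_{ki})\in\mathrm{Mat}_{l\times n}(\mathbb{Z})$ with columns $c_1,\dots,c_n$, and for nonempty $J=\{i_1<\dots<i_k\}\subseteq[n]$ let $C_J=(c_{i_1},\dots,c_{i_k})$. There are unimodular $S_J\in\mathrm{Mat}_{l\times l}(\mathbb{Z})$, $T_J\in\mathrm{Mat}_{k\times k}(\mathbb{Z})$ with $S_JC_JT_J$ equal to the Smith normal form, having diagonal block $\mathrm{diag}(e_{J,1},\dots,e_{J,r})$, $e_{J,i}>0$, $e_{J,1}\mid\dots\mid e_{J,r}$, $r=\mathrm{rk}(C_J)$, and zeros elsewhere; set $e(J)=e_{J,r}$. The $\lcm$-period is $\rho_0=\lcm\{e(J): J\subseteq[n],\ 1\le|J|\le l\}$. Further $q_0=\max_{\emptyset\ne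 J\subseteq[n]}\min_{S_J}\max\{|u| : u \text{ an entry of } S_JC_J \text{ or } C_J\}$, the minimum over all such unimodular $S_J$. Two indexed families $\{H^{(1)}_i\}$ in $K_1^l$, $\{H^{(2)}_i\}$ in $K_2^l$ are combinatorially equivalent if $\dim(H^{(1)}_{i_1}\cap\dots\cap H^{(1)}_{i_k})=\dim(H^{(2)}_{i_1}\cap\dots\cap H^{(2)}_{i_k})$ for all $i_1<\dots<i_k$. *)

theory Defs
  imports "Jordan_Normal_Form.VS_Connect" "Berlekamp_Zassenhaus.Finite_Field"
begin

text \<open>The arrangement is encoded by the integer coefficient matrix C (l x n);
  column i holds the coefficients c_{1i},...,c_{li} of the linear form alpha_i.
  Over a field 'a the form alpha_i is evaluated via the canonical map of_int : int -> 'a;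
  for 'a = rat this is alpha_i itself, for 'a = 'p mod_ring it is the reduction mod p.\<close>

definition lin_form :: "int mat \<Rightarrow> nat \<Rightarrow> 'a::comm_ring_1 vec \<Rightarrow> 'a" where
  "lin_form C i x = (\<Sum>k<dim_row C. of_int (C $$ (k, i)) * x $ k)"

definition hyperplane :: "int mat \<Rightarrow> nat \<Rightarrow> 'a::field vec set" where
  "hyperplane C i = {x \<in> carrier_vec (dim_row C). lin_form C i x = 0}"

definition subspace_dim :: "nat \<Rightarrow> 'a::field vec set \<Rightarrow> nat" where
  "subspace_dim l W = vectorspace.dim class_ring ((module_vec TYPE('a) l)\<lparr>carrier := W\<rparr>)"

definition comb_equiv :: "nat \<Rightarrow> nat \<Rightarrow> (nat \<Rightarrow> 'a::field vec set) \<Rightarrow> (nat \<Rightarrow> 'b::field vec set) \<Rightarrow> bool" where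
  "comb_equiv l n H1 H2 \<longleftrightarrow>
     (\<forall>J. J \<subseteq> {..<n} \<and> J \<noteq> {} \<longrightarrow>
        subspace_dim l (\<Inter>i\<in>J. H1 i) = subspace_dim l (\<Inter>i\<in>J. H2 i))"

definition sub_cols :: "int mat \<Rightarrow> nat set \<Rightarrow> int mat" where
  "sub_cols C J = mat (dim_row C) (card J) (\<lambda>(r, j). C $$ (r, sorted_list_of_set J ! j))"

definition unimodular :: "nat \<Rightarrow> int mat \<Rightarrow> bool" where
  "unimodular k S \<longleftrightarrow> S \<in> carrier_mat k k \<and> (det S = 1 \<or> det S = -1)"

definition is_snf :: "int mat \<Rightarrow> nat \<Rightarrow> bool" where
  "is_snf D r \<longleftrightarrow> r \<le> min (dim_row D) (dim_col D) \<and>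
     (\<forall>i<dim_row D. \<forall>j<dim_col D. (i \<noteq> j \<or> r \<le> i) \<longrightarrow> D $$ (i, j) = 0) \<and>
     (\<forall>i<r. D $$ (i, i) > 0) \<and>
     (\<forall>i. Suc i < r \<longrightarrow> D $$ (i, i) dvd D $$ (Suc i, Suc i))"

definition snf_decomp :: "int mat \<Rightarrow> int mat \<Rightarrow> int mat \<Rightarrow> nat \<Rightarrow> bool" where
  "snf_decomp M S T r \<longleftrightarrow> unimodular (dim_row M) S \<and> unimodular (dim_col M) T \<and>
     is_snf (S * M * T) r"

definition eJ :: "int mat \<Rightarrow> nat set \<Rightarrow> int" where
  "eJ C J = (SOME e. \<exists>S T r. snf_decomp (sub_cols C J) S T r \<and> 0 < r \<and>
                        e = (S * sub_cols C J * T) $$ (r - 1, r - 1))"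

definition rho0 :: "int mat \<Rightarrow> int" where
  "rho0 C = Lcm {eJ C J | J. J \<subseteq> {..<dim_col C} \<and> 1 \<le> card J \<and> card J \<le> dim_row C}"

definition max_abs_entry :: "int mat \<Rightarrow> nat" where
  "max_abs_entry M = Max (insert 0 {nat \<bar>M $$ (i, j)\<bar> | i j. i < dim_row M \<and> j < dim_col M})"

definition q0 :: "int mat \<Rightarrow> nat" where
  "q0 C = Max (insert 0
     {(INF S\<in>{S. \<exists>T r. snf_decomp (sub_cols C J) S T r}.
          max (max_abs_entry (S * sub_cols C J)) (max_abs_entry (sub_cols C J)))
      | J. J \<subseteq> {..<dim_col C} \<and> J \<noteq> {}})"

end

theory Submission
  imports Defs "Jordan_Normal_Form.Matrix_Kernel" "Jordan_Normal_Form.Column_Operations"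
begin


definition uequiv :: "int mat \<Rightarrow> int mat \<Rightarrow> bool" where
 "uequiv M N \<longleftrightarrow> (\<exists>S T. unimodular (dim_row M) S \<and> unimodular (dim_col M) T \<and> N = S * M * T)"

lemma uequiv_dims: "uequiv M N \<Longrightarrow> dim_row N = dim_row M \<and> dim_col N = dim_col M"
  by (auto simp: uequiv_def unimodular_def)

lemma unimodular_one: "unimodular n (1\<^sub>m n)"
  by (auto simp: unimodular_def)

lemma unimodular_mult: "unimodular n A \<Longrightarrow> unimodular n B \<Longrightarrow> unimodular n (A * B)"
  unfolding unimodular_def using det_mult[of A n B] by auto

lemma uequiv_refl: "uequiv M M"
proof -
  have M: "M \<in> carrier_mat (dim_row M) (dim_col M)" by auto
  show ?thesis unfolding uequiv_def
    by (rule exI[of _ "1\<^sub>m (dim_row M)"], rule exI[of _ "1\<^sub>m (dim_col M)"])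
      (simp add: unimodular_one M)
qed

lemma uequiv_trans: assumes "uequiv M N" "uequiv N P" shows "uequiv M P"
proof -
  obtain S T where S: "unimodular (dim_row M) S" and T: "unimodular (dim_col M) T"
    and N: "N = S * M * T" using assms(1) unfolding uequiv_def by blast
  have dN: "dim_row N = dim_row M" "dim_col N = dim_col M" using uequiv_dims[OF assms(1)] by auto
  obtain S' T' where S': "unimodular (dim_row M) S'" and T': "unimodular (dim_col M) T'"
    and P: "P = S' * N * T'" using assms(2) unfolding uequiv_def dN by blast
  have M: "M \<in> carrier_mat (dim_row M) (dim_col M)" by (rule carrier_matI) auto
  have cS: "S \<in> carrier_mat (dim_row M) (dim_row M)" "S' \<in> carrier_mat (dim_row M) (dim_row M)"
    using S S' unfolding unimodular_def by blast+
  have cT: "T \<in> carrier_mat (dim_col M) (dim_col M)" "T' \<in> carrier_mat (dim_col M) (dim_col M)"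
    using T T' unfolding unimodular_def by blast+
  have c1: "S * M \<in> carrier_mat (dim_row M) (dim_col M)" by (rule mult_carrier_mat[OF cS(1) M])
  have c2: "S' * (S * M) \<in> carrier_mat (dim_row M) (dim_col M)" by (rule mult_carrier_mat[OF cS(2) c1])
  have e1: "(S' * S) * M = S' * (S * M)" by (rule assoc_mult_mat[OF cS(2) cS(1) M])
  have e2: "(S' * (S*M)) * (T*T') = ((S' * (S*M)) * T) * T'" by (rule assoc_mult_mat[OF c2 cT(1) cT(2), symmetric])
  have e3: "S' * (S*M) * T = S' * (S*M*T)" by (rule assoc_mult_mat[OF cS(2) c1 cT(1)])
  have "P = (S' * S) * M * (T * T')"
    unfolding P N e1 e2 e3 ..
  then show ?thesis unfolding uequiv_def using unimodular_mult[OF S' S] unimodular_mult[OF T T'] by blast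
qed

lemma uequiv_left: assumes "unimodular (dim_row M) U" shows "uequiv M (U * M)"
proof -
  have M: "M \<in> carrier_mat (dim_row M) (dim_col M)" by (rule carrier_matI) auto
  have U: "U \<in> carrier_mat (dim_row M) (dim_row M)" using assms unfolding unimodular_def by blast
  have "U * M \<in> carrier_mat (dim_row M) (dim_col M)" using U M by (rule mult_carrier_mat)
  then have "U * M * 1\<^sub>m (dim_col M) = U * M" by (rule right_mult_one_mat)
  then show ?thesis unfolding uequiv_def using assms unimodular_one[of "dim_col M"] by metis
qed

lemma uequiv_right: assumes "unimodular (dim_col M) V" shows "uequiv M (M * V)"
proof -
  have M: "M \<in> carrier_mat (dim_row M) (dim_col M)" by (rule carrier_matI) auto
  have "1\<^sub>m (dim_row M) * M = M" using M by (rule left_mult_one_mat)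
  then have "1\<^sub>m (dim_row M) * M * V = M * V" by simp
  then show ?thesis unfolding uequiv_def using assms unimodular_one[of "dim_row M"] by metis
qed

lemma unimodular_addrow: "k \<noteq> l \<Longrightarrow> unimodular n (addrow_mat n a k l)"
  unfolding unimodular_def by (simp add: det_addrow_mat)

lemma unimodular_swaprows: assumes "k < n" "l < n" shows "unimodular n (swaprows_mat n k l)"
proof (cases "k = l")
  case True
  then have "swaprows_mat n k l = (1\<^sub>m n :: int mat)" by (intro eq_matI) (auto simp: swaprows_mat_def)
  then show ?thesis by (simp add: unimodular_one)
next
  case False
  then show ?thesis unfolding unimodular_def using assms by (simp add: det_swaprows_mat)
qed

lemma unimodular_multrow: "k < n \<Longrightarrow> unimodular n (multrow_mat n k (-1))"
  unfolding unimodular_def by (simp add: det_multrow_mat)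

lemma uequiv_addrow: assumes "k \<noteq> l" "l < dim_row M" shows "uequiv M (addrow a k l M)"
  using addrow_mat[of M "dim_row M" "dim_col M" l a k] assms uequiv_left unimodular_addrow by auto

lemma uequiv_swaprows: assumes "k < dim_row M" "l < dim_row M" shows "uequiv M (swaprows k l M)"
  using swaprows_mat[of M "dim_row M" "dim_col M" k l] assms uequiv_left unimodular_swaprows by auto

lemma uequiv_multrow: assumes "k < dim_row M" shows "uequiv M (multrow k (-1) M)"
  using multrow_mat[of M "dim_row M" "dim_col M" k "-1"] assms uequiv_left unimodular_multrow by auto

lemma uequiv_addcol: assumes "k \<noteq> l" "k < dim_col M" shows "uequiv M (addcol a l k M)"
  using addcol_mat[of M "dim_row M" "dim_col M" k a l] assms uequiv_right unimodular_addrow by auto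

lemma uequiv_swapcols: assumes "k < dim_col M" "l < dim_col M" shows "uequiv M (swapcols k l M)"
  using swapcols_mat[of M "dim_row M" "dim_col M" k l] assms uequiv_right unimodular_swaprows by auto

definition ptf :: "nat \<Rightarrow> int mat \<Rightarrow> bool" where
 "ptf t N \<longleftrightarrow> t \<le> dim_row N \<and> t \<le> dim_col N \<and>
   (\<forall>i<dim_row N. \<forall>j<dim_col N. (i < t \<or> j < t) \<and> i \<noteq> j \<longrightarrow> N $$ (i,j) = 0) \<and>
   (\<forall>i<t. N $$ (i,i) > 0) \<and>
   (\<forall>i. Suc i < t \<longrightarrow> N $$ (i,i) dvd N $$ (Suc i, Suc i)) \<and>
   (0 < t \<longrightarrow> (\<forall>i<dim_row N. \<forall>j<dim_col N. t \<le> i \<and> t \<le> j \<longrightarrow> N $$ (t-1,t-1) dvd N $$ (i,j)))"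

lemma ptf_addrow: assumes "ptf t N" "t \<le> k" "t \<le> l" "k < dim_row N" "l < dim_row N"
  shows "ptf t (addrow a k l N)"
  using assms unfolding ptf_def by (auto simp: dvd_add dvd_mult)

lemma ptf_swaprows: assumes "ptf t N" "t \<le> k" "t \<le> l" "k < dim_row N" "l < dim_row N"
  shows "ptf t (swaprows k l N)"
  using assms unfolding ptf_def by auto

lemma ptf_multrow: assumes "ptf t N" "t \<le> k" "k < dim_row N"
  shows "ptf t (multrow k a N)"
  using assms unfolding ptf_def by (auto simp: dvd_mult)

lemma ptf_addcol: assumes "ptf t N" "t \<le> k" "t \<le> l" "k < dim_col N" "l < dim_col N"
  shows "ptf t (addcol a k l N)"
  using assms unfolding ptf_def by (auto simp: dvd_add dvd_mult)

lemma ptf_swapcols: assumes "ptf t N" "t \<le> k" "t \<le> l" "k < dim_col N" "l < dim_col N"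
  shows "ptf t (swapcols k l N)"
  using assms unfolding ptf_def by auto

lemma ptf_step:
  assumes P: "ptf t N" and i0: "i0 < dim_row N" "t \<le> i0" and j0: "j0 < dim_col N" "t \<le> j0"
    and nz: "N $$ (i0,j0) \<noteq> 0"
  shows "\<exists>N'. uequiv N N' \<and> ptf (Suc t) N'"
proof -
  define m where "m = dim_row N"
  define k where "k = dim_col N"
  define G where "G = {N'. uequiv N N' \<and> ptf t N'}"
  have Gd: "dim_row N' = m \<and> dim_col N' = k" if "N' \<in> G" for N'
    using that uequiv_dims unfolding G_def m_def k_def by blast
  have Gi: "N'' \<in> G" if "N' \<in> G" "uequiv N' N''" "ptf t N''" for N' N''
    using that uequiv_trans unfolding G_def by blast
  have Gp: "ptf t N'" if "N' \<in> G" for N' using that unfolding G_def by blast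
  have NG: "N \<in> G" unfolding G_def using uequiv_refl P by blast
  define V where "V = {x. \<exists>N' i j. N' \<in> G \<and> t \<le> i \<and> i < m \<and> t \<le> j \<and> j < k \<and> N' $$ (i,j) \<noteq> 0 \<and> x = nat \<bar>N' $$ (i,j)\<bar>}"
  have "nat \<bar>N $$ (i0,j0)\<bar> \<in> V" unfolding V_def using NG i0 j0 nz m_def k_def by blast
  then have d0V: "(LEAST x. x \<in> V) \<in> V" by (rule LeastI)
  define d where "d = int (LEAST x. x \<in> V)"
  from d0V obtain N1 i1 j1 where N1: "N1 \<in> G" "t \<le> i1" "i1 < m" "t \<le> j1" "j1 < k" "N1 $$ (i1,j1) \<noteq> 0"
     and d1: "d = \<bar>N1 $$ (i1,j1)\<bar>"
    unfolding V_def d_def by auto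
  have dpos: "d > 0" using N1(6) d1 by simp
  have mind: "d \<le> \<bar>N' $$ (i,j)\<bar>" if "N' \<in> G" "t \<le> i" "i < m" "t \<le> j" "j < k" "N' $$ (i,j) \<noteq> 0" for N' i j
  proof -
    have "nat \<bar>N' $$ (i,j)\<bar> \<in> V" unfolding V_def using that by blast
    then have "(LEAST x. x \<in> V) \<le> nat \<bar>N' $$ (i,j)\<bar>" by (rule Least_le)
    then show ?thesis unfolding d_def by simp
  qed
  have tm: "t < m" and tk: "t < k" using N1 by auto
  define N2a where "N2a = swapcols t j1 N1"
  have d2a: "dim_row N2a = m" "dim_col N2a = k" using Gd[OF N1(1)] unfolding N2a_def by auto
  have N2aG: "N2a \<in> G" unfolding N2a_def
    using Gi[OF N1(1) uequiv_swapcols ptf_swapcols[OF Gp[OF N1(1)]]] Gd[OF N1(1)] tk N1 by auto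
  define N2 where "N2 = swaprows t i1 N2a"
  have N2G: "N2 \<in> G" unfolding N2_def
    using Gi[OF N2aG uequiv_swaprows ptf_swaprows[OF Gp[OF N2aG]]] d2a tm N1 by auto
  have N2tt: "N2 $$ (t,t) = N1 $$ (i1,j1)"
    unfolding N2_def using d2a tm tk N1 Gd[OF N1(1)] by (simp add: N2a_def)
  define N3 where "N3 = (if N2 $$ (t,t) < 0 then multrow t (-1) N2 else N2)"
  have N3G: "N3 \<in> G"
  proof (cases "N2 $$ (t,t) < 0")
    case True
    then show ?thesis unfolding N3_def
      using Gi[OF N2G uequiv_multrow ptf_multrow[OF Gp[OF N2G]]] Gd[OF N2G] tm by auto
  qed (simp add: N3_def N2G)
  have N3tt: "N3 $$ (t,t) = d"
    unfolding N3_def d1 N2tt[symmetric] using Gd[OF N2G] tm tk by auto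
  have colD: "d dvd N' $$ (i,t)" if "N' \<in> G" "N' $$ (t,t) = d" "t < i" "i < m" for N' i
  proof -
    define x where "x = N' $$ (i,t)"
    define N'' where "N'' = addrow (-(x div d)) i t N'"
    have G'': "N'' \<in> G" unfolding N''_def
      using Gi[OF that(1) uequiv_addrow ptf_addrow[OF Gp[OF that(1)]]] Gd[OF that(1)] that tm by auto
    have e: "N'' $$ (i,t) = x mod d"
      unfolding N''_def using Gd[OF that(1)] that tk
      by (simp add: x_def[symmetric] minus_div_mult_eq_mod[symmetric] algebra_simps)
    have "x mod d = 0"
    proof (rule ccontr)
      assume ne: "x mod d \<noteq> 0"
      have "d \<le> \<bar>N'' $$ (i,t)\<bar>" 
        by (rule mind[OF G'']) (use that tk e ne in simp_all)
      then have "d \<le> \<bar>x mod d\<bar>" using e by simp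
      moreover have "0 \<le> x mod d" "x mod d < d" using dpos by simp_all
      ultimately show False by simp
    qed
    then show ?thesis unfolding x_def by (simp add: dvd_eq_mod_eq_0)
  qed
  have rowD: "d dvd N' $$ (t,j)" if "N' \<in> G" "N' $$ (t,t) = d" "t < j" "j < k" for N' j
  proof -
    define x where "x = N' $$ (t,j)"
    define N'' where "N'' = addcol (-(x div d)) j t N'"
    have G'': "N'' \<in> G" unfolding N''_def
      using Gi[OF that(1) uequiv_addcol ptf_addcol[OF Gp[OF that(1)]]] Gd[OF that(1)] that tk by auto
    have e: "N'' $$ (t,j) = x mod d"
      unfolding N''_def using Gd[OF that(1)] that tm
      by (simp add: x_def[symmetric] minus_div_mult_eq_mod[symmetric] algebra_simps)
    have "x mod d = 0"
    proof (rule ccontr)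
      assume ne: "x mod d \<noteq> 0"
      have "d \<le> \<bar>N'' $$ (t,j)\<bar>" 
        by (rule mind[OF G'']) (use that tm e ne in simp_all)
      then have "d \<le> \<bar>x mod d\<bar>" using e by simp
      moreover have "0 \<le> x mod d" "x mod d < d" using dpos by simp_all
      ultimately show False by simp
    qed
    then show ?thesis unfolding x_def by (simp add: dvd_eq_mod_eq_0)
  qed
  have clearcol: "\<exists>N'\<in>G. N' $$ (t,t) = d \<and> (\<forall>i. t < i \<and> i < s \<and> i < m \<longrightarrow> N' $$ (i,t) = 0)" for s
  proof (induction s)
    case 0
    then show ?case using N3G N3tt by auto
  next
    case (Suc s)
    then obtain N' where N': "N' \<in> G" "N' $$ (t,t) = d" "\<forall>i. t < i \<and> i < s \<and> i < m \<longrightarrow> N' $$ (i,t) = 0"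
      by blast
    show ?case
    proof (cases "t < s \<and> s < m")
      case True
      define N'' where "N'' = addrow (-(N' $$ (s,t) div d)) s t N'"
      have G'': "N'' \<in> G" unfolding N''_def
        using Gi[OF N'(1) uequiv_addrow ptf_addrow[OF Gp[OF N'(1)]]] Gd[OF N'(1)] True tm by auto
      have dv: "d dvd N' $$ (s,t)" using colD[OF N'(1,2)] True by auto
      have "N'' $$ (t,t) = d" unfolding N''_def using Gd[OF N'(1)] True tm tk N'(2) by simp
      moreover have "N'' $$ (i,t) = 0" if "t < i" "i < Suc s" "i < m" for i
      proof (cases "i = s")
        case True
        then show ?thesis unfolding N''_def using Gd[OF N'(1)] that tk N'(2) dv by simp
      next
        case False
        then show ?thesis unfolding N''_def using Gd[OF N'(1)] that tk N'(3) by simp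
      qed
      ultimately show ?thesis using G'' by blast
    next
      case False
      then show ?thesis using N' by (metis less_SucE)
    qed
  qed
  have clearrow: "\<exists>N'\<in>G. N' $$ (t,t) = d \<and> (\<forall>i. t < i \<and> i < m \<longrightarrow> N' $$ (i,t) = 0)
      \<and> (\<forall>j. t < j \<and> j < s \<and> j < k \<longrightarrow> N' $$ (t,j) = 0)" for s
  proof (induction s)
    case 0
    then show ?case using clearcol[of m] by auto
  next
    case (Suc s)
    then obtain N' where N': "N' \<in> G" "N' $$ (t,t) = d" "\<forall>i. t < i \<and> i < m \<longrightarrow> N' $$ (i,t) = 0"
       "\<forall>j. t < j \<and> j < s \<and> j < k \<longrightarrow> N' $$ (t,j) = 0"
      by blast
    show ?case
    proof (cases "t < s \<and> s < k")
      case True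
      define N'' where "N'' = addcol (-(N' $$ (t,s) div d)) s t N'"
      have G'': "N'' \<in> G" unfolding N''_def
        using Gi[OF N'(1) uequiv_addcol ptf_addcol[OF Gp[OF N'(1)]]] Gd[OF N'(1)] True tk by auto
      have dv: "d dvd N' $$ (t,s)" using rowD[OF N'(1,2)] True by auto
      have "N'' $$ (t,t) = d" unfolding N''_def using Gd[OF N'(1)] True tm tk N'(2) by simp
      moreover have "N'' $$ (i,t) = 0" if "t < i" "i < m" for i
        unfolding N''_def using Gd[OF N'(1)] that tk True N'(3) by simp
      moreover have "N'' $$ (t,j) = 0" if "t < j" "j < Suc s" "j < k" for j
      proof (cases "j = s")
        case True
        then show ?thesis unfolding N''_def using Gd[OF N'(1)] that tm N'(2) dv by simp
      next
        case False
        then show ?thesis unfolding N''_def using Gd[OF N'(1)] that tm N'(4) by simp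
      qed
      ultimately show ?thesis using G'' by blast
    next
      case False
      then show ?thesis using N' by (metis less_SucE)
    qed
  qed
  obtain N5 where N5: "N5 \<in> G" "N5 $$ (t,t) = d" "\<forall>i. t < i \<and> i < m \<longrightarrow> N5 $$ (i,t) = 0"
       "\<forall>j. t < j \<and> j < k \<longrightarrow> N5 $$ (t,j) = 0"
    using clearrow[of k] by auto
  have lowD: "d dvd N5 $$ (i,j)" if "t < i" "i < m" "t < j" "j < k" for i j
  proof -
    define N6 where "N6 = addrow 1 t i N5"
    have G6: "N6 \<in> G" unfolding N6_def
      using Gi[OF N5(1) uequiv_addrow ptf_addrow[OF Gp[OF N5(1)]]] Gd[OF N5(1)] that tm by auto
    have "N6 $$ (t,t) = d" unfolding N6_def using Gd[OF N5(1)] that tm tk N5(2,3) by simp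
    from rowD[OF G6 this that(3,4)]
    show ?thesis unfolding N6_def using Gd[OF N5(1)] that tm N5(4) by simp
  qed
  have P5: "ptf t N5" using Gp[OF N5(1)] .
  have d5: "dim_row N5 = m" "dim_col N5 = k" using Gd[OF N5(1)] by auto
  have "ptf (Suc t) N5"
    unfolding ptf_def d5
  proof (intro conjI allI impI)
    show "Suc t \<le> m" "Suc t \<le> k" using tm tk by auto
  next
    fix i j assume ij: "i < m" "j < k" "(i < Suc t \<or> j < Suc t) \<and> i \<noteq> j"
    show "N5 $$ (i,j) = 0"
    proof (cases "i < t \<or> j < t")
      case True
      then show ?thesis using P5 ij unfolding ptf_def d5 by blast
    next
      case False
      then have "(i = t \<and> t < j) \<or> (j = t \<and> t < i)" using ij by auto
      then show ?thesis using N5(3,4) ij by auto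
    qed
  next
    fix i assume "i < Suc t"
    show "0 < N5 $$ (i,i)"
    proof (cases "i < t")
      case True
      then show ?thesis using P5 unfolding ptf_def by blast
    next
      case False
      then have "i = t" using \<open>i < Suc t\<close> by simp
      then show ?thesis using N5(2) dpos by simp
    qed
  next
    fix i assume i: "Suc i < Suc t"
    show "N5 $$ (i,i) dvd N5 $$ (Suc i, Suc i)"
    proof (cases "Suc i < t")
      case True
      then show ?thesis using P5 unfolding ptf_def by blast
    next
      case False
      then have "Suc i = t" using i by auto
      then show ?thesis using P5 tm tk unfolding ptf_def d5
        by (metis diff_Suc_1 le_refl zero_less_Suc)
    qed
  next
    fix i j assume "0 < Suc t" "i < m" "j < k" "Suc t \<le> i \<and> Suc t \<le> j"
    then show "N5 $$ (Suc t - 1, Suc t - 1) dvd N5 $$ (i, j)" using lowD N5(2) by auto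
  qed
  moreover have "uequiv N N5" using N5(1) unfolding G_def by blast
  ultimately show ?thesis by blast
qed

lemma ptf_zero_snf: assumes P: "ptf t N" and Z: "\<forall>i<dim_row N. \<forall>j<dim_col N. t \<le> i \<and> t \<le> j \<longrightarrow> N $$ (i,j) = 0"
  shows "is_snf N t"
  unfolding is_snf_def
proof (intro conjI allI impI)
  show "t \<le> min (dim_row N) (dim_col N)" using P unfolding ptf_def by simp
next
  fix i j assume ij: "i < dim_row N" "j < dim_col N" "i \<noteq> j \<or> t \<le> i"
  show "N $$ (i,j) = 0"
  proof (cases "t \<le> i \<and> t \<le> j")
    case True
    then show ?thesis using Z ij by blast
  next
    case False
    then have "(i < t \<or> j < t) \<and> i \<noteq> j" using ij by auto
    then show ?thesis using P ij unfolding ptf_def by blast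
  qed
next
  fix i assume "i < t" then show "0 < N $$ (i,i)" using P unfolding ptf_def by blast
next
  fix i assume "Suc i < t" then show "N $$ (i,i) dvd N $$ (Suc i, Suc i)" using P unfolding ptf_def by blast
qed

lemma snf_from_ptf: "ptf t N \<Longrightarrow> \<exists>N' r. uequiv N N' \<and> is_snf N' r"
proof (induction "dim_row N - t" arbitrary: N t rule: less_induct)
  case less
  show ?case
  proof (cases "\<exists>i<dim_row N. \<exists>j<dim_col N. t \<le> i \<and> t \<le> j \<and> N $$ (i,j) \<noteq> 0")
    case True
    then obtain i j where ij: "i < dim_row N" "j < dim_col N" "t \<le> i" "t \<le> j" "N $$ (i,j) \<noteq> 0" by blast
    from ptf_step[OF less.prems ij(1,3) ij(2,4) ij(5)] obtain N' where
      N': "uequiv N N'" "ptf (Suc t) N'" by blast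
    have "dim_row N' = dim_row N" using uequiv_dims[OF N'(1)] by simp
    then have "dim_row N' - Suc t < dim_row N - t" using ij by simp
    from less.hyps[OF this N'(2)] obtain N'' r where "uequiv N' N''" "is_snf N'' r" by blast
    then show ?thesis using uequiv_trans[OF N'(1)] by blast
  next
    case False
    then have "is_snf N t" using ptf_zero_snf[OF less.prems] by blast
    then show ?thesis using uequiv_refl by blast
  qed
qed

lemma snf_exists: "\<exists>S T r. snf_decomp M S T r"
proof -
  have "ptf 0 M" unfolding ptf_def by simp
  from snf_from_ptf[OF this] obtain N r where "uequiv M N" "is_snf N r" by blast
  then show ?thesis unfolding uequiv_def snf_decomp_def by blast
qed

lemma sdim_kernel: "subspace_dim l (mat_kernel (A::'a::field mat)) = kernel.dim l A"
  unfolding subspace_dim_def by simp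

lemma inv_exists: assumes A: "A \<in> carrier_mat n n" and d: "det A \<noteq> (0::'a::field)"
  shows "\<exists>B. B \<in> carrier_mat n n \<and> A * B = 1\<^sub>m n \<and> B * A = 1\<^sub>m n"
  using det_non_zero_imp_unit[OF A d, of undefined] unfolding Units_def ring_mat_def
  by auto

lemma diag_kernel_dim:
  fixes s k l :: nat
  assumes "s \<le> k" "s \<le> l"
  shows "subspace_dim l (mat_kernel (mat k l (\<lambda>(i,j). if i = j \<and> i < s then 1 else 0) :: 'a::field mat)) = l - s"
proof -
  define E :: "'a mat" where "E = mat k l (\<lambda>(i,j). if i = j \<and> i < s then 1 else 0)"
  have E: "E \<in> carrier_mat k l" unfolding E_def by simp
  have ref: "row_echelon_form E"
    unfolding row_echelon_form_def
  proof (intro exI[of _ "\<lambda>i. if i < s then i else l"] pivot_funI)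
    show "dim_row E = k" using E by simp
  qed (use assms in \<open>auto simp: E_def split: if_splits\<close>)
  have "{i. i < k \<and> row E i \<noteq> 0\<^sub>v l} = {..<s}"
  proof (intro equalityI subsetI)
    fix i assume "i \<in> {i. i < k \<and> row E i \<noteq> 0\<^sub>v l}"
    then have i: "i < k" "row E i \<noteq> 0\<^sub>v l" by auto
    show "i \<in> {..<s}"
    proof (rule ccontr)
      assume "i \<notin> {..<s}"
      then have "row E i = 0\<^sub>v l" using i E by (intro eq_vecI) (auto simp: E_def)
      with i show False by simp
    qed
  next
    fix i assume "i \<in> {..<s}"
    then have i: "i < s" by simp
    then have "row E i $ i = 1" using assms by (simp add: E_def)
    then have "row E i \<noteq> 0\<^sub>v l" using i assms by auto
    then show "i \<in> {i. i < k \<and> row E i \<noteq> 0\<^sub>v l}" using i assms by simp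
  qed
  then have "kernel.dim l E = l - s" using find_base_vectors(6)[OF ref E] by simp
  then show ?thesis unfolding E_def[symmetric] sdim_kernel .
qed


lemma diag_mult_zero:
  fixes A :: "'a::field mat"
  assumes A: "A \<in> carrier_mat k l" and r: "r \<le> k" "r \<le> l"
    and Ae: "\<And>i j. i < k \<Longrightarrow> j < l \<Longrightarrow> A $$ (i,j) = (if i = j \<and> i < r then c i else 0)"
    and v: "v \<in> carrier_vec l"
  shows "A *\<^sub>v v = 0\<^sub>v k \<longleftrightarrow> (\<forall>i<r. c i * v $ i = 0)"
proof -
  have ent: "(A *\<^sub>v v) $ i = (if i < r then c i * v $ i else 0)" if i: "i < k" for i
  proof -
    have "(A *\<^sub>v v) $ i = (\<Sum>j\<in>{0..<l}. A $$ (i,j) * v $ j)"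
      using A v i by (simp add: scalar_prod_def)
    also have "\<dots> = (\<Sum>j\<in>{0..<l}. (if j = i then (if i < r then c i * v $ i else 0) else 0))"
      by (rule sum.cong) (use i Ae in auto)
    also have "\<dots> = (if i < r then c i * v $ i else 0)"
      using r i by (cases "i < r") (auto simp: sum.delta)
    finally show ?thesis .
  qed
  show ?thesis
  proof
    assume z: "A *\<^sub>v v = 0\<^sub>v k"
    show "\<forall>i<r. c i * v $ i = 0"
    proof (intro allI impI)
      fix i assume "i < r"
      then have "(A *\<^sub>v v) $ i = c i * v $ i" "i < k" using ent r by auto
      then show "c i * v $ i = 0" using z by simp
    qed
  next
    assume z: "\<forall>i<r. c i * v $ i = 0"
    show "A *\<^sub>v v = 0\<^sub>v k"
      by (rule eq_vecI) (use A ent z in auto)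
  qed
qed

lemma snf_kernel_dim:
  fixes M S T :: "int mat"
  assumes M: "M \<in> carrier_mat l k" and snf: "snf_decomp M S T r"
   and s: "s \<le> r" "\<forall>i<r. (of_int ((S*M*T) $$ (i,i)) \<noteq> (0::'a::field)) \<longleftrightarrow> i < s"
  shows "subspace_dim l (mat_kernel (transpose_mat (map_mat (of_int :: int \<Rightarrow> 'a) M))) = l - s"
proof -
  define D where "D = S * M * T"
  have dM: "dim_row M = l" "dim_col M = k" using M by auto
  have S: "S \<in> carrier_mat l l" and dS: "det S = 1 \<or> det S = -1"
   and T: "T \<in> carrier_mat k k" and dT: "det T = 1 \<or> det T = -1"
   and isnf: "is_snf D r" using snf unfolding snf_decomp_def unimodular_def D_def dM by auto
  have D: "D \<in> carrier_mat l k" unfolding D_def using S M T by auto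
  have rle: "r \<le> l" "r \<le> k" using isnf D unfolding is_snf_def by auto
  have Dz: "D $$ (i,j) = 0" if "i < l" "j < k" "i \<noteq> j \<or> r \<le> i" for i j
    using isnf D that unfolding is_snf_def by auto
  define SK where "SK = map_mat (of_int :: int \<Rightarrow> 'a) S"
  define MK where "MK = map_mat (of_int :: int \<Rightarrow> 'a) M"
  define TK where "TK = map_mat (of_int :: int \<Rightarrow> 'a) T"
  define DK where "DK = map_mat (of_int :: int \<Rightarrow> 'a) D"
  have SK: "SK \<in> carrier_mat l l" and MK: "MK \<in> carrier_mat l k" and TK: "TK \<in> carrier_mat k k"
    and DK: "DK \<in> carrier_mat l k"
    unfolding SK_def MK_def TK_def DK_def using S M T D by auto
  have "DK = SK * MK * TK" unfolding DK_def SK_def MK_def TK_def D_def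
    by (simp add: of_int_hom.mat_hom_mult[OF mult_carrier_mat[OF S M] T] of_int_hom.mat_hom_mult[OF S M])
  have dSK: "det SK \<noteq> 0" unfolding SK_def of_int_hom.hom_det using dS by auto
  have dTK: "det TK \<noteq> 0" unfolding TK_def of_int_hom.hom_det using dT by auto
  obtain SKi where SKi: "SKi \<in> carrier_mat l l" "SK * SKi = 1\<^sub>m l" "SKi * SK = 1\<^sub>m l"
    using inv_exists[OF SK dSK] by blast
  obtain TKi where TKi: "TKi \<in> carrier_mat k k" "TK * TKi = 1\<^sub>m k" "TKi * TK = 1\<^sub>m k"
    using inv_exists[OF TK dTK] by blast
  have tr: "transpose_mat DK = transpose_mat TK * (transpose_mat MK * transpose_mat SK)"
    unfolding \<open>DK = SK * MK * TK\<close>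
    using transpose_mult[OF mult_carrier_mat[OF SK MK] TK] transpose_mult[OF SK MK] by simp
  have i1: "transpose_mat TKi * transpose_mat TK = 1\<^sub>m k"
    using transpose_mult[OF TK TKi(1)] TKi(2) by simp
  have i2: "transpose_mat SK * transpose_mat SKi = 1\<^sub>m l"
    using transpose_mult[OF SKi(1) SK] SKi(3) by simp
  have MKt: "transpose_mat MK \<in> carrier_mat k l" using MK by simp
  have e1: "mat_kernel (transpose_mat DK) = mat_kernel (transpose_mat MK * transpose_mat SK)"
    unfolding tr
    by (rule mat_kernel_mult_eq[OF mult_carrier_mat[OF MKt] _ _ i1]) (use SK TK TKi in auto)
  have e2: "kernel.dim l (transpose_mat MK * transpose_mat SK) = kernel.dim l (transpose_mat MK)"
    by (rule mat_kernel_dim_mult_eq_right[OF MKt _ _ i2]) (use SK SKi in auto)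
  define E :: "'a mat" where "E = mat k l (\<lambda>(i,j). if i = j \<and> i < s then 1 else 0)"
  have DKt: "transpose_mat DK \<in> carrier_mat k l" using DK by simp
  have Et: "E \<in> carrier_mat k l" unfolding E_def by simp
  have DKe: "transpose_mat DK $$ (i,j) = (if i = j \<and> i < r then of_int (D $$ (i,i)) else 0)"
    if "i < k" "j < l" for i j
  proof -
    have "transpose_mat DK $$ (i,j) = DK $$ (j,i)" using that DK by simp
    also have "\<dots> = of_int (D $$ (j,i))" unfolding DK_def using that D by simp
    finally show ?thesis using Dz[of j i] that by auto
  qed
  have Ee: "E $$ (i,j) = (if i = j \<and> i < s then 1 else 0)" if "i < k" "j < l" for i j
    using that unfolding E_def by simp
  have e3: "mat_kernel (transpose_mat DK) = mat_kernel E"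
  proof (intro equalityI subsetI)
    fix v assume "v \<in> mat_kernel (transpose_mat DK)"
    then have v: "v \<in> carrier_vec l" "transpose_mat DK *\<^sub>v v = 0\<^sub>v k"
      using mat_kernelD[OF DKt] by auto
    then have "\<forall>i<r. of_int (D $$ (i,i)) * v $ i = 0"
      using diag_mult_zero[OF DKt rle(2) rle(1) DKe v(1)] by simp
    then have "\<forall>i<s. 1 * v $ i = (0::'a)" using s unfolding D_def
      by (metis less_le_trans mult_1 mult_eq_0_iff)
    then have "E *\<^sub>v v = 0\<^sub>v k" using diag_mult_zero[OF Et _ _ Ee v(1)] s rle by simp
    then show "v \<in> mat_kernel E" using mat_kernelI[OF Et v(1)] by simp
  next
    fix v assume "v \<in> mat_kernel E"
    then have v: "v \<in> carrier_vec l" "E *\<^sub>v v = 0\<^sub>v k"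
      using mat_kernelD[OF Et] by auto
    then have "\<forall>i<s. 1 * v $ i = (0::'a)"
      using diag_mult_zero[OF Et _ _ Ee v(1)] s rle by simp
    then have "\<forall>i<r. of_int (D $$ (i,i)) * v $ i = (0::'a)" using s unfolding D_def by auto
    then have "transpose_mat DK *\<^sub>v v = 0\<^sub>v k"
      using diag_mult_zero[OF DKt rle(2) rle(1) DKe v(1)] by simp
    then show "v \<in> mat_kernel (transpose_mat DK)" using mat_kernelI[OF DKt v(1)] by simp
  qed
  have "subspace_dim l (mat_kernel (transpose_mat MK)) = subspace_dim l (mat_kernel E)"
    unfolding sdim_kernel e2[symmetric] e3[symmetric] e1 ..
  also have "\<dots> = l - s" unfolding E_def by (rule diag_kernel_dim) (use s rle in auto)
  finally show ?thesis unfolding MK_def .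
qed


lemma ker_submodule: assumes A: "A \<in> carrier_mat nr nc"
  shows "submodule class_ring (mat_kernel A) (module_vec TYPE('a::field) nc)"
proof -
  interpret K: kernel nr nc A by unfold_locales (rule A)
  show ?thesis
    apply (unfold_locales)
    by (insert A mult_add_distrib_mat_vec[OF A] mult_mat_vec[OF A] mat_kernel[OF A], 
        auto simp: class_ring_simps)
qed

lemma ker_dim_mono:
  fixes A B :: "'a::field mat"
  assumes A: "A \<in> carrier_mat na l" and B: "B \<in> carrier_mat nb l" and sub: "mat_kernel A \<subseteq> mat_kernel B"
  shows "kernel.dim l A \<le> kernel.dim l B"
    and "kernel.dim l A = kernel.dim l B \<Longrightarrow> mat_kernel A = mat_kernel B"
proof -
  interpret KA: kernel na l A by unfold_locales (rule A)
  interpret KB: kernel nb l B by unfold_locales (rule B)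
  obtain bA where finA: "finite bA" and basA: "KA.basis bA" using kernel_basis_exists[OF A] by blast
  obtain bB where finB: "finite bB" and basB: "KB.basis bB" using kernel_basis_exists[OF B] by blast
  have dimA: "KA.dim = card bA" by (rule KA.Ker.dim_basis[OF finA basA])
  have bAA: "bA \<subseteq> mat_kernel A" and liA: "\<not> KA.lin_dep bA" and genA: "KA.span bA = mat_kernel A"
    using basA unfolding KA.Ker.basis_def by auto
  have bAB: "bA \<subseteq> mat_kernel B" using bAA sub by blast
  have smA: "submodule class_ring (mat_kernel A) (module_vec TYPE('a) l)" by (rule ker_submodule[OF A])
  have smB: "submodule class_ring (mat_kernel B) (module_vec TYPE('a) l)" by (rule ker_submodule[OF B])
  have liB: "\<not> KB.lin_dep bA"
    using liA KA.NC.span_li_not_depend(2)[OF bAA smA] KA.NC.span_li_not_depend(2)[OF bAB smB] by simp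
  have fdB: "KB.Ker.fin_dim" unfolding KB.Ker.fin_dim_def using finB basB unfolding KB.Ker.basis_def by blast
  have le: "card bA \<le> KB.dim" using KB.Ker.li_le_dim(2)[OF fdB _ liB] bAB by simp
  then show "kernel.dim l A \<le> kernel.dim l B" using dimA by simp
  assume eq: "kernel.dim l A = kernel.dim l B"
  have "KB.basis bA" 
    by (rule KB.Ker.dim_li_is_basis[OF fdB finA _ liB]) (use bAB eq dimA in auto)
  then have "KB.span bA = mat_kernel B" unfolding KB.Ker.basis_def by auto
  moreover have "KB.span bA = KA.span bA"
    using KA.NC.span_li_not_depend(1)[OF bAA smA] KA.NC.span_li_not_depend(1)[OF bAB smB] by simp
  ultimately show "mat_kernel A = mat_kernel B" using genA by simp
qed



lemma modring_of_int_0: "of_int e = (0::'p::prime_card mod_ring) \<Longrightarrow> int CARD('p) dvd e"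
  by (simp add: of_int_eq_0_iff_char_dvd)

lemma coprime_not_dvd: assumes "coprime (int CARD('p::prime_card)) L" "e dvd L" 
  shows "\<not> int CARD('p) dvd e"
proof
  assume "int CARD('p) dvd e"
  then have "int CARD('p) dvd L" using assms(2) by (rule dvd_trans)
  then have "is_unit (int CARD('p))" using assms(1) coprime_absorb_left by blast
  moreover have "CARD('p) > 1" using prime_card[where 'a='p] prime_gt_1_nat by blast
  ultimately show False by simp
qed


definition kset :: "int mat \<Rightarrow> nat set \<Rightarrow> 'a::field vec set" where
  "kset C J = {x \<in> carrier_vec (dim_row C). \<forall>i\<in>J. lin_form C i x = 0}"

lemma kset_kernel: assumes J: "finite J"
  shows "kset C J = mat_kernel (transpose_mat (map_mat (of_int :: int \<Rightarrow> 'a::field) (sub_cols C J)))"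
proof -
  define A :: "'a mat" where "A = transpose_mat (map_mat of_int (sub_cols C J))"
  define \<sigma> where "\<sigma> = (\<lambda>j. sorted_list_of_set J ! j)"
  have A: "A \<in> carrier_mat (card J) (dim_row C)" unfolding A_def sub_cols_def by simp
  have ent: "(A *\<^sub>v v) $ j = lin_form C (\<sigma> j) v" if "j < card J" "v \<in> carrier_vec (dim_row C)" for j v
    using that unfolding A_def sub_cols_def lin_form_def \<sigma>_def
    by (simp add: scalar_prod_def lessThan_atLeast0)
  have allJ: "(\<forall>j<card J. P (\<sigma> j)) \<longleftrightarrow> (\<forall>i\<in>J. P i)" for P
  proof -
    have "set (sorted_list_of_set J) = J" "length (sorted_list_of_set J) = card J" using J by auto
    then show ?thesis unfolding \<sigma>_def by (metis in_set_conv_nth)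
  qed
  have "v \<in> kset C J \<longleftrightarrow> v \<in> mat_kernel A" for v
  proof (cases "v \<in> carrier_vec (dim_row C)")
    case True
    have "A *\<^sub>v v = 0\<^sub>v (card J) \<longleftrightarrow> (\<forall>j<card J. (A *\<^sub>v v) $ j = 0)"
      using A by (auto simp: vec_eq_iff)
    also have "\<dots> \<longleftrightarrow> (\<forall>j<card J. lin_form C (\<sigma> j) v = 0)" using ent True by simp
    also have "\<dots> \<longleftrightarrow> (\<forall>i\<in>J. lin_form C i v = 0)" by (rule allJ)
    finally show ?thesis unfolding kset_def mat_kernel[OF A] using True by simp
  next
    case False
    then show ?thesis unfolding kset_def mat_kernel[OF A] by simp
  qed
  then show ?thesis unfolding A_def by blast
qed

lemma kset_carrier: "finite J \<Longrightarrow> transpose_mat (map_mat (of_int :: int \<Rightarrow> 'a::field) (sub_cols C J)) \<in> carrier_mat (card J) (dim_row C)"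
  unfolding sub_cols_def by simp

lemma inter_hyper: "J \<noteq> {} \<Longrightarrow> (\<Inter>i\<in>J. hyperplane C i) = kset C J"
  unfolding hyperplane_def kset_def by auto

lemma kset_mono:
  assumes J1: "finite J1" and J2: "finite J2" and sub: "J2 \<subseteq> J1"
  shows "subspace_dim (dim_row C) (kset C J1 :: 'a::field vec set) \<le> subspace_dim (dim_row C) (kset C J2 :: 'a vec set)"
    and "subspace_dim (dim_row C) (kset C J1 :: 'a::field vec set) = subspace_dim (dim_row C) (kset C J2 :: 'a vec set)
         \<Longrightarrow> (kset C J1 :: 'a vec set) = kset C J2"
proof -
  have ss: "(kset C J1 :: 'a vec set) \<subseteq> kset C J2" using sub unfolding kset_def by auto
  note k1 = kset_kernel[OF J1, of C, where 'a='a] and k2 = kset_kernel[OF J2, of C, where 'a='a]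
  note m = ker_dim_mono[OF kset_carrier[OF J1] kset_carrier[OF J2] ss[unfolded k1 k2]]
  show "subspace_dim (dim_row C) (kset C J1 :: 'a::field vec set) \<le> subspace_dim (dim_row C) (kset C J2 :: 'a vec set)"
    unfolding k1 k2 sdim_kernel using m(1) .
  assume "subspace_dim (dim_row C) (kset C J1 :: 'a::field vec set) = subspace_dim (dim_row C) (kset C J2 :: 'a vec set)"
  then show "(kset C J1 :: 'a vec set) = kset C J2" unfolding k1 k2 sdim_kernel using m(2) by simp
qed

lemma prefix_exists: fixes r :: nat assumes "\<forall>i j. i \<le> j \<and> j < r \<and> f j \<longrightarrow> f i" shows "\<exists>s\<le>r. \<forall>i<r. f i \<longleftrightarrow> i < s"
  using assms
proof (induction r)
  case 0
  then show ?case by auto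
next
  case (Suc r)
  have pr: "\<forall>i j. i \<le> j \<and> j < r \<and> f j \<longrightarrow> f i" using Suc.prems less_Suc_eq by blast
  obtain s where s: "s \<le> r" "\<forall>i<r. f i \<longleftrightarrow> i < s" using Suc.IH[OF pr] by blast
  show ?case
  proof (cases "s = r \<and> f r")
    case True
    have "\<forall>i<Suc r. f i \<longleftrightarrow> i < Suc r"
    proof (intro allI impI)
      fix i assume "i < Suc r"
      then have "i < r \<or> i = r" by linarith
      then show "f i \<longleftrightarrow> i < Suc r" using True s by auto
    qed
    then show ?thesis by blast
  next
    case False
    have "\<not> f r"
    proof
      assume fr: "f r"
      then have sr: "s < r" using False s by auto
      have "f s" using Suc.prems fr sr by (meson less_Suc_eq order.strict_implies_order)
      then show False using s sr by auto
    qed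
    have "\<forall>i<Suc r. f i \<longleftrightarrow> i < s"
    proof (intro allI impI)
      fix i assume "i < Suc r"
      then have "i < r \<or> i = r" by linarith
      then show "f i \<longleftrightarrow> i < s" using \<open>\<not> f r\<close> s by auto
    qed
    then show ?thesis using s(1) by (intro exI[of _ s]) simp
  qed
qed

lemma snf_chain: assumes "is_snf D r" "i \<le> j" "j < r" shows "D $$ (i,i) dvd D $$ (j,j)"
  using assms(2,3)
proof (induction j)
  case 0
  then show ?case by simp
next
  case (Suc j)
  show ?case
  proof (cases "i = Suc j")
    case False
    then have "D $$ (i,i) dvd D $$ (j,j)" using Suc by simp
    moreover have "D $$ (j,j) dvd D $$ (Suc j, Suc j)" using assms(1) Suc.prems unfolding is_snf_def by blast
    ultimately show ?thesis by (rule dvd_trans)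
  qed simp
qed

lemma snf_dc: assumes isnf: "is_snf D r"
  shows "\<forall>i j. i \<le> j \<and> j < r \<and> of_int (D $$ (j,j)) \<noteq> (0::'a::field) \<longrightarrow> of_int (D $$ (i,i)) \<noteq> (0::'a)"
proof (intro allI impI)
  fix i j assume ij: "i \<le> j \<and> j < r \<and> of_int (D $$ (j,j)) \<noteq> (0::'a)"
  have ij2: "i \<le> j" "j < r" and nzj: "of_int (D $$ (j,j)) \<noteq> (0::'a)" using ij by simp_all
  have "D $$ (i,i) dvd D $$ (j,j)" by (rule snf_chain[OF isnf ij2])
  then obtain q where q: "D $$ (j,j) = D $$ (i,i) * q" by (rule dvdE)
  have e: "of_int (D $$ (j,j)) = (of_int (D $$ (i,i)) * of_int q :: 'a)" unfolding q by (rule of_int_mult)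
  show "of_int (D $$ (i,i)) \<noteq> (0::'a)"
  proof
    assume "of_int (D $$ (i,i)) = (0::'a)"
    then have "of_int (D $$ (j,j)) = (0::'a)" unfolding e by simp
    then show False using nzj by contradiction
  qed
qed

lemma dims_formula:
  fixes C S T :: "int mat"
  assumes J: "finite J" and snf: "snf_decomp (sub_cols C J) S T r"
  shows "subspace_dim (dim_row C) (kset C J :: rat vec set) = dim_row C - r"
    and "\<exists>s\<le>r. subspace_dim (dim_row C) (kset C J :: 'a::field vec set) = dim_row C - s"
    and "of_int ((S * sub_cols C J * T) $$ (r-1,r-1)) \<noteq> (0::'a::field) \<Longrightarrow>
         subspace_dim (dim_row C) (kset C J :: 'a vec set) = dim_row C - r"
proof -
  define M where "M = sub_cols C J"
  define D where "D = S * M * T"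
  have M: "M \<in> carrier_mat (dim_row C) (card J)" unfolding M_def sub_cols_def by simp
  have isnf: "is_snf D r" using snf unfolding snf_decomp_def D_def M_def by (rule conjunct2[OF conjunct2])
  have pos: "D $$ (i,i) > 0" if "i < r" for i using isnf that unfolding is_snf_def by simp
  have dc: "\<forall>i j. i \<le> j \<and> j < r \<and> of_int (D $$ (j,j)) \<noteq> (0::'a) \<longrightarrow> of_int (D $$ (i,i)) \<noteq> (0::'a)"
    by (rule snf_dc[OF isnf])
  have "\<forall>i<r. (of_int (D $$ (i,i)) \<noteq> (0::rat)) \<longleftrightarrow> i < r"
  proof (intro allI impI)
    fix i assume "i < r" then show "(of_int (D $$ (i,i)) \<noteq> (0::rat)) \<longleftrightarrow> i < r" using pos[of i] by simp
  qed
  from snf_kernel_dim[OF M snf[folded M_def] order_refl this[unfolded D_def]]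
  show "subspace_dim (dim_row C) (kset C J :: rat vec set) = dim_row C - r"
    unfolding kset_kernel[OF J] M_def .
  have ex: "\<exists>s\<le>r. \<forall>i<r. (of_int (D $$ (i,i)) \<noteq> (0::'a)) \<longleftrightarrow> i < s"
    using prefix_exists[where f="\<lambda>i. of_int (D $$ (i,i)) \<noteq> (0::'a)" and r=r] dc by simp
  then obtain s where s: "s \<le> r" "\<forall>i<r. (of_int (D $$ (i,i)) \<noteq> (0::'a)) \<longleftrightarrow> i < s"
    by (elim exE conjE)
  have eqs: "subspace_dim (dim_row C) (kset C J :: 'a::field vec set) = dim_row C - s"
    using snf_kernel_dim[OF M snf[folded M_def] s(1) s(2)[unfolded D_def]]
    unfolding kset_kernel[OF J] M_def .
  show "\<exists>s\<le>r. subspace_dim (dim_row C) (kset C J :: 'a::field vec set) = dim_row C - s"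
    by (rule exI[of _ s]) (simp only: eqs s(1) simp_thms)
  assume nz: "of_int ((S * sub_cols C J * T) $$ (r-1,r-1)) \<noteq> (0::'a::field)"
  have "\<forall>i<r. (of_int (D $$ (i,i)) \<noteq> (0::'a)) \<longleftrightarrow> i < r"
  proof (intro allI impI)
    fix i assume "i < r"
    then show "(of_int (D $$ (i,i)) \<noteq> (0::'a)) \<longleftrightarrow> i < r"
    proof -
      have "i \<le> r - 1" "r - 1 < r" using \<open>i < r\<close> by auto
      moreover have "of_int (D $$ (r-1,r-1)) \<noteq> (0::'a)" using nz unfolding D_def M_def .
      ultimately have "of_int (D $$ (i,i)) \<noteq> (0::'a)" using dc[rule_format, of i "r-1"] by simp
      then show ?thesis using \<open>i < r\<close> by simp
    qed
  qed
  from snf_kernel_dim[OF M snf[folded M_def] order_refl this[unfolded D_def]]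
  show "subspace_dim (dim_row C) (kset C J :: 'a vec set) = dim_row C - r"
    unfolding kset_kernel[OF J] M_def .
qed


lemma snf_rank_le: assumes "snf_decomp M S T r" shows "r \<le> dim_col M"
proof -
  have T: "T \<in> carrier_mat (dim_col M) (dim_col M)" using assms unfolding snf_decomp_def unimodular_def by blast
  have "is_snf (S * M * T) r" using assms unfolding snf_decomp_def by blast
  then have "r \<le> dim_col (S * M * T)" unfolding is_snf_def by simp
  then show ?thesis using T by simp
qed

theorem corollary7p3:
  fixes C :: "int mat" and l n :: nat
  assumes dims: "C \<in> carrier_mat l n"
    and primitive: "\<forall>i<n. \<not> (\<exists>q::int. prime q \<and> (\<forall>k<l. q dvd C $$ (k, i)))"
    and distinct: "\<forall>i<n. \<forall>j<n. i \<noteq> j \<longrightarrow>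
                      (hyperplane C i :: rat vec set) \<noteq> hyperplane C j"
    and essential: "(\<Inter>i\<in>{..<n}. (hyperplane C i :: rat vec set)) = {0\<^sub>v l}"
    and p_large: "CARD('p::prime_card) > q0 C"
    and p_coprime: "coprime (int CARD('p)) (rho0 C)"
  shows "comb_equiv l n (hyperplane C :: nat \<Rightarrow> rat vec set)
                        (hyperplane C :: nat \<Rightarrow> 'p mod_ring vec set)"
proof -
  have dC: "dim_row C = l" "dim_col C = n" using dims by auto
  define dQ where "dQ = (\<lambda>I. subspace_dim l (kset C I :: rat vec set))"
  define dP where "dP = (\<lambda>I. subspace_dim l (kset C I :: 'p mod_ring vec set))"
  have main: "dQ J = dP J" if J: "J \<subseteq> {..<n}" "J \<noteq> {}" for J
  proof -
    have finJ: "finite J" using J(1) finite_subset by blast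
    obtain S T r where snfJ: "snf_decomp (sub_cols C J) S T r" using snf_exists by blast
    have dQJ: "dQ J = l - r" unfolding dQ_def using dims_formula(1)[OF finJ snfJ] dC by simp
    obtain s where s: "s \<le> r" "dP J = l - s"
      using dims_formula(2)[OF finJ snfJ, where 'a="'p mod_ring"] dC unfolding dP_def by auto
    have ge: "dQ J \<le> dP J" using dQJ s by simp
    define P where "P = (\<lambda>c. \<exists>I. I \<subseteq> J \<and> (kset C I :: rat vec set) = kset C J \<and> card I = c)"
    have "P (card J)" unfolding P_def by blast
    then have "P (LEAST c. P c)" by (rule LeastI)
    then obtain J' where J': "J' \<subseteq> J" "(kset C J' :: rat vec set) = kset C J" "card J' = (LEAST c. P c)"
      unfolding P_def by blast
    have minJ': "card J' \<le> card I" if "I \<subseteq> J" "(kset C I :: rat vec set) = kset C J" for I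
    proof -
      have "P (card I)" unfolding P_def using that by blast
      then show ?thesis unfolding J'(3) by (rule Least_le)
    qed
    have finJ': "finite J'" using J'(1) finJ finite_subset by blast
    have dQ0: "dQ {} = l"
    proof -
      obtain S0 T0 r0 where snf0: "snf_decomp (sub_cols C {}) S0 T0 r0" using snf_exists by blast
      have "r0 \<le> dim_col (sub_cols C {})" by (rule snf_rank_le[OF snf0])
      then have "r0 = 0" unfolding sub_cols_def by simp
      then show ?thesis unfolding dQ_def using dims_formula(1)[OF _ snf0] dC by simp
    qed
    have chain: "I \<subseteq> J' \<Longrightarrow> dQ I + card I \<le> l" if "finite I" for I
      using that
    proof (induction I rule: finite_induct)
      case empty
      then show ?case using dQ0 by simp
    next
      case (insert a I)
      have IH: "dQ I + card I \<le> l" using insert by simp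
      have finI: "finite (insert a I)" using insert by simp
      have le: "dQ (insert a I) \<le> dQ I" unfolding dQ_def
        using kset_mono(1)[OF finI insert(1), of C, where 'a=rat] dC by auto
      have ne: "dQ (insert a I) \<noteq> dQ I"
      proof
        assume eq: "dQ (insert a I) = dQ I"
        then have kk: "(kset C (insert a I) :: rat vec set) = kset C I"
          using kset_mono(2)[OF finI insert(1), of C, where 'a=rat] dC unfolding dQ_def by auto
        have aJ': "a \<in> J'" "I \<subseteq> J' - {a}" using insert by auto
        have "(kset C (J' - {a}) :: rat vec set) = kset C J'"
        proof (intro equalityI subsetI)
          fix x assume x: "x \<in> (kset C (J' - {a}) :: rat vec set)"
          then have "x \<in> (kset C I :: rat vec set)" using aJ'(2) unfolding kset_def by auto
          then have "x \<in> (kset C (insert a I) :: rat vec set)" using kk by simp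
          then have "lin_form C a x = 0" unfolding kset_def by auto
          then show "x \<in> kset C J'" using x unfolding kset_def by auto
        next
          fix x assume "x \<in> (kset C J' :: rat vec set)"
          then show "x \<in> kset C (J' - {a})" unfolding kset_def by auto
        qed
        then have "card J' \<le> card (J' - {a})" using minJ'[of "J' - {a}"] J' by auto
        moreover have "card (J' - {a}) < card J'" by (rule card_Diff1_less[OF finJ' aJ'(1)])
        ultimately show False by simp
      qed
      have "card (insert a I) = card I + 1" using insert by simp
      then show ?case using IH le ne by simp
    qed
    have cardJ': "card J' \<le> l" using chain[OF finJ' order_refl] by simp
    have le: "dP J \<le> dQ J"
    proof (cases "J' = {}")
      case True
      then have "dQ J = l" using J'(2) dQ0 unfolding dQ_def by simp
      then show ?thesis using s by simp
    next
      case False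
      obtain S' T' r' where snf': "snf_decomp (sub_cols C J') S' T' r'" using snf_exists by blast
      have r'pos: "0 < r'"
      proof (rule ccontr)
        assume "\<not> 0 < r'"
        then have "dQ J' = l" unfolding dQ_def using dims_formula(1)[OF finJ' snf'] dC by simp
        then have "dQ J' = dQ {}" using dQ0 by simp
        then have "(kset C J' :: rat vec set) = kset C {}"
          using kset_mono(2)[OF finJ' finite.emptyI, of C, where 'a=rat] dC unfolding dQ_def by auto
        then have "card J' \<le> card ({}::nat set)" using minJ'[of "{}"] J'(2) by simp
        then show False using False finJ' by simp
      qed
      have "\<exists>e. \<exists>S T r. snf_decomp (sub_cols C J') S T r \<and> 0 < r \<and>
                        e = (S * sub_cols C J' * T) $$ (r - 1, r - 1)"
        by (intro exI[of _ "(S' * sub_cols C J' * T') $$ (r' - 1, r' - 1)"] exI[of _ S'] exI[of _ T'] exI[of _ r'] conjI snf' r'pos refl)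
      then have "\<exists>S T r. snf_decomp (sub_cols C J') S T r \<and> 0 < r \<and>
                        eJ C J' = (S * sub_cols C J' * T) $$ (r - 1, r - 1)"
        unfolding eJ_def by (rule someI_ex)
      then obtain S2 T2 r2 where snf2: "snf_decomp (sub_cols C J') S2 T2 r2"
        and e2: "eJ C J' = (S2 * sub_cols C J' * T2) $$ (r2 - 1, r2 - 1)" by blast
      have "eJ C J' \<in> {eJ C J | J. J \<subseteq> {..<dim_col C} \<and> 1 \<le> card J \<and> card J \<le> dim_row C}"
      proof -
        have "J' \<subseteq> {..<dim_col C}" using J'(1) J(1) dC by auto
        moreover have "1 \<le> card J'" using False finJ' by (simp add: Suc_le_eq card_gt_0_iff)
        moreover have "card J' \<le> dim_row C" using cardJ' dC by simp
        ultimately show ?thesis by (intro CollectI exI[of _ J'] conjI refl)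
      qed
      then have "eJ C J' dvd rho0 C" unfolding rho0_def by (rule dvd_Lcm)
      then have "\<not> int CARD('p) dvd eJ C J'" by (rule coprime_not_dvd[OF p_coprime])
      then have "of_int (eJ C J') \<noteq> (0::'p mod_ring)" using modring_of_int_0[where 'p='p] by metis
      then have nz: "of_int ((S2 * sub_cols C J' * T2) $$ (r2-1,r2-1)) \<noteq> (0::'p mod_ring)" unfolding e2 .
      have "dP J' = l - r2" unfolding dP_def using dims_formula(3)[OF finJ' snf2 nz] dC by simp
      moreover have "dQ J' = l - r2" unfolding dQ_def using dims_formula(1)[OF finJ' snf2] dC by simp
      moreover have "dP J \<le> dP J'" unfolding dP_def
        using kset_mono(1)[OF finJ finJ' J'(1), of C, where 'a="'p mod_ring"] dC by simp
      moreover have "dQ J' = dQ J" unfolding dQ_def using J'(2) by simp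
      ultimately show ?thesis by simp
    qed
    show ?thesis using ge le by simp
  qed
  show ?thesis unfolding comb_equiv_def
  proof (intro allI impI)
    fix J assume J: "J \<subseteq> {..<n} \<and> J \<noteq> {}"
    then have eq: "dQ J = dP J" using main by blast
    have nJ: "J \<noteq> {}" using J by simp
    have e1: "(\<Inter>i\<in>J. (hyperplane C i :: rat vec set)) = kset C J" by (rule inter_hyper[OF nJ])
    have e2: "(\<Inter>i\<in>J. (hyperplane C i :: 'p mod_ring vec set)) = kset C J" by (rule inter_hyper[OF nJ])
    show "subspace_dim l (\<Inter>i\<in>J. (hyperplane C i :: rat vec set)) =
               subspace_dim l (\<Inter>i\<in>J. (hyperplane C i :: 'p mod_ring vec set))"
      unfolding e1 e2 using eq unfolding dQ_def dP_def .
  qed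
qed

end
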